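(* Let $X$ and $Y$ be finite sets with $|Y| = n$, let $I = X \cap Y$, and let $p \in [1/2, 1]$. Define two random variables as follows. (1) (Mechanism $\mathcal M'_Y$.) Sample $s \sim \mathrm{Bin}(n, 2(1-p))$; choose $T$ uniformly at random among all subsets of $Y$ of cardinality $s$; independently for each $y \in I \cap T$ flip a fair coin $c_y \sim \mathrm{Ber}(1/2)$; set $Z' = |I \setminus T| + \sum_{y \in I \cap T} c_y$. (2) (Mechanism $\mathcal M''_Y$.) Sample $s_1 \sim \mathrm{Bin}(|I|, 2(1-p))$; choose $T_1$ uniformly at random among all subsets of $I$ of cardinality $s_1$; independently for each $y \in T_1$ flip a fair coin $c_y \sim \mathrm{Ber}(1/2)$; set $Z'' = |I \setminus T_1| + \sum_{y \in T_1} c_y$. Then $\Pr[Z' = z] = \Pr[Z'' = z]$ for all integers $z \ge 0$.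
   Context: $\mathrm{Ber}(r)$ denotes a Bernoulli random variable with success probability $r$, and $\mathrm{Bin}(m, r)$ a binomial random variable with $m$ trials and success probability $r$. All random choices are independent unless stated otherwise. *)

theory Defs
  imports "HOL-Probability.Probability"
begin

definition mech1 :: "'a set \<Rightarrow> 'a set \<Rightarrow> real \<Rightarrow> nat pmf" where
  "mech1 X Y p = do {
     s \<leftarrow> binomial_pmf (card Y) (2 * (1 - p));
     T \<leftarrow> pmf_of_set {T. T \<subseteq> Y \<and> card T = s};
     c \<leftarrow> Pi_pmf ((X \<inter> Y) \<inter> T) False (\<lambda>_. bernoulli_pmf (1/2));
     return_pmf (card ((X \<inter> Y) - T) + card {y \<in> (X \<inter> Y) \<inter> T. c y})
   }"

definition mech2 :: "'a set \<Rightarrow> 'a set \<Rightarrow> real \<Rightarrow> nat pmf" where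
  "mech2 X Y p = do {
     s1 \<leftarrow> binomial_pmf (card (X \<inter> Y)) (2 * (1 - p));
     T1 \<leftarrow> pmf_of_set {T. T \<subseteq> X \<inter> Y \<and> card T = s1};
     c \<leftarrow> Pi_pmf T1 False (\<lambda>_. bernoulli_pmf (1/2));
     return_pmf (card ((X \<inter> Y) - T1) + card {y \<in> T1. c y})
   }"

end

theory Submission
  imports Defs
begin

lemma pmf_map_inj_S:
  assumes "inj_on f S" "set_pmf M \<subseteq> S" "x \<in> S"
  shows "pmf (map_pmf f M) (f x) = pmf M x"
proof (cases "x \<in> set_pmf M")
  case True
  then show ?thesis using assms by (intro pmf_map_inj) (auto intro: inj_on_subset)
next
  case False
  have "f x \<notin> f ` set_pmf M" using False assms by (auto dest: inj_onD)
  then have "f x \<notin> set_pmf (map_pmf f M)" by simp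
  then show ?thesis using False by (metis pmf_eq_0_set_pmf set_map_pmf)
qed

definition rsub :: "'a set \<Rightarrow> real \<Rightarrow> 'a set pmf" where
  "rsub Y q = map_pmf (\<lambda>f. {y\<in>Y. f y}) (Pi_pmf Y False (\<lambda>_. bernoulli_pmf q))"

lemma pmf_rsub:
  assumes Y: "finite Y" and q: "0 \<le> q" "q \<le> 1"
  shows "pmf (rsub Y q) T = (if T \<subseteq> Y then q ^ card T * (1 - q) ^ (card Y - card T) else 0)"
proof (cases "T \<subseteq> Y")
  case True
  let ?M = "Pi_pmf Y False (\<lambda>_. bernoulli_pmf q)"
  let ?S = "{f. \<forall>x. x \<notin> Y \<longrightarrow> f x = False}"
  have inj: "inj_on (\<lambda>f. {y\<in>Y. f y}) ?S"
  proof (rule inj_onI)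
    fix f g assume f: "f \<in> ?S" and g: "g \<in> ?S" and e: "{y\<in>Y. f y} = {y\<in>Y. g y}"
    show "f = g"
    proof
      fix x show "f x = g x" using f g e by (cases "x \<in> Y") (auto simp: set_eq_iff)
    qed
  qed
  have sub: "set_pmf ?M \<subseteq> ?S" using set_Pi_pmf_subset[OF Y, of False "\<lambda>_. bernoulli_pmf q"] by auto
  have mem: "(\<lambda>y. y \<in> T) \<in> ?S" using True by auto
  have pm: "pmf ?M (\<lambda>y. y \<in> T) = (\<Prod>y\<in>Y. if y \<in> T then q else 1 - q)"
    using True q by (auto simp: pmf_Pi[OF Y] intro!: prod.cong)
  also have "\<dots> = q ^ card T * (1 - q) ^ (card Y - card T)"
    using True Y by (simp add: prod.If_cases Int_absorb1 card_Diff_subset finite_subset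
        flip: Diff_eq)
  finally have pm': "pmf ?M (\<lambda>y. y \<in> T) = q ^ card T * (1 - q) ^ (card Y - card T)" .
  have "{y\<in>Y. y \<in> T} = T" using True by auto
  then have "pmf (rsub Y q) T = pmf (map_pmf (\<lambda>f. {y\<in>Y. f y}) ?M) ((\<lambda>f. {y\<in>Y. f y}) (\<lambda>y. y \<in> T))"
    by (simp add: rsub_def)
  also have "\<dots> = pmf ?M (\<lambda>y. y \<in> T)" by (rule pmf_map_inj_S[OF inj sub mem])
  finally show ?thesis using pm' True by simp
next
  case False
  have "T \<notin> set_pmf (rsub Y q)" using False by (auto simp: rsub_def)
  then show ?thesis using False by (simp add: set_pmf_eq)
qed

lemma binom_subset:
  assumes Y: "finite Y" and q: "0 \<le> q" "q \<le> 1"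
  shows "binomial_pmf (card Y) q \<bind> (\<lambda>s. pmf_of_set {T. T \<subseteq> Y \<and> card T = s}) = rsub Y q"
proof (rule pmf_eqI)
  fix T
  let ?n = "card Y"
  let ?S = "\<lambda>s. {T. T \<subseteq> Y \<and> card T = s}"
  have cS: "\<And>s. card (?S s) = ?n choose s" by (rule n_subsets[OF Y])
  have fS: "\<And>s. finite (?S s)" proof -
    fix s show "finite (?S s)" by (rule finite_subset[of _ "Pow Y"]) (use Y in auto)
  qed
  have sb: "set_pmf (binomial_pmf ?n q) \<subseteq> {..?n}"
    using q by (auto simp: set_pmf_binomial_eq split: if_splits)
  have "pmf (binomial_pmf ?n q \<bind> (\<lambda>s. pmf_of_set (?S s))) T
      = (\<Sum>s\<in>{..?n}. pmf (binomial_pmf ?n q) s * pmf (pmf_of_set (?S s)) T)"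
    unfolding pmf_bind
    by (subst integral_measure_pmf[of "{..?n}"]) (use sb in auto)
  also have "\<dots> = (\<Sum>s\<in>{..?n}. if s = card T then (if T \<subseteq> Y then q ^ card T * (1 - q) ^ (?n - card T) else 0) else 0)"
  proof (rule sum.cong[OF refl])
    fix s assume s: "s \<in> {..?n}"
    obtain U where U: "U \<subseteq> Y" "card U = s"
      using s Y by (meson atMost_iff obtain_subset_with_card_n)
    then have ne: "?S s \<noteq> {}" by auto
    have e1: "pmf (pmf_of_set (?S s)) T = indicator (?S s) T / (?n choose s)"
      using ne fS cS by simp
    have e2: "pmf (binomial_pmf ?n q) s = (?n choose s) * q ^ s * (1 - q) ^ (?n - s)"
      using q by simp
    have nz: "real (?n choose s) \<noteq> 0" using s by simp
    show "pmf (binomial_pmf ?n q) s * pmf (pmf_of_set (?S s)) T =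
      (if s = card T then (if T \<subseteq> Y then q ^ card T * (1 - q) ^ (?n - card T) else 0) else 0)"
      unfolding e1 e2 using nz by (cases "s = card T"; cases "T \<subseteq> Y") (simp_all add: indicator_def)
  qed
  also have "\<dots> = (if T \<subseteq> Y then q ^ card T * (1 - q) ^ (?n - card T) else 0)"
  proof (cases "T \<subseteq> Y")
    case True
    then have "card T \<in> {..?n}" using Y by (simp add: card_mono)
    then show ?thesis by (simp add: sum.delta')
  qed simp
  also have "\<dots> = pmf (rsub Y q) T"
    using pmf_rsub[OF Y q, of T] by simp
  finally show "pmf (binomial_pmf ?n q \<bind> (\<lambda>s. pmf_of_set (?S s))) T = pmf (rsub Y q) T" .
qed

lemma rsub_restrict:
  assumes Y: "finite Y" and I: "I \<subseteq> Y"
  shows "map_pmf (\<lambda>T. I \<inter> T) (rsub Y q) = rsub I q"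
proof -
  have "rsub I q = map_pmf (\<lambda>f. {y\<in>I. f y})
      (map_pmf (\<lambda>f x. if x \<in> I then f x else False) (Pi_pmf Y False (\<lambda>_. bernoulli_pmf q)))"
    unfolding rsub_def using Pi_pmf_subset[OF Y I, of False "\<lambda>_. bernoulli_pmf q"] by simp
  also have "\<dots> = map_pmf (\<lambda>T. I \<inter> T) (rsub Y q)"
    unfolding rsub_def map_pmf_comp using I by (intro map_pmf_cong) auto
  finally show ?thesis ..
qed

theorem lemma3:
  fixes X Y :: "'a set" and p :: real and n :: nat
  assumes "finite X" and "finite Y" and "card Y = n"
    and "1/2 \<le> p" and "p \<le> 1"
  shows "\<forall>z::nat. pmf (mech1 X Y p) z = pmf (mech2 X Y p) z"
proof -
  define q where "q = 2 * (1 - p)"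
  define I where "I = X \<inter> Y"
  have q: "0 \<le> q" "q \<le> 1" using assms unfolding q_def by auto
  have Y: "finite Y" by fact
  have IY: "I \<subseteq> Y" and fI: "finite I" using Y unfolding I_def by auto
  define h where "h = (\<lambda>U. Pi_pmf U False (\<lambda>_. bernoulli_pmf (1/2)) \<bind>
      (\<lambda>c. return_pmf (card (I - U) + card {y\<in>U. c y})))"
  have "mech1 X Y p = (binomial_pmf (card Y) q \<bind> (\<lambda>s. pmf_of_set {T. T \<subseteq> Y \<and> card T = s}))
      \<bind> (\<lambda>T. h (I \<inter> T))"
  proof -
    have e: "\<And>T. X \<inter> Y - X \<inter> Y \<inter> T = X \<inter> Y - T" by auto
    show ?thesis unfolding mech1_def bind_assoc_pmf h_def q_def I_def
      by (simp only: e)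
  qed
  also have "\<dots> = map_pmf (\<lambda>T. I \<inter> T) (rsub Y q) \<bind> h"
    by (simp add: binom_subset[OF Y q] bind_map_pmf)
  also have "\<dots> = rsub I q \<bind> h" by (simp add: rsub_restrict[OF Y IY])
  also have "\<dots> = (binomial_pmf (card I) q \<bind> (\<lambda>s. pmf_of_set {T. T \<subseteq> I \<and> card T = s})) \<bind> h"
    by (simp add: binom_subset[OF fI q])
  also have "\<dots> = mech2 X Y p"
    unfolding mech2_def bind_assoc_pmf h_def q_def I_def by simp
  finally show ?thesis by simp
qed

end
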